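(* Let $g(x)=\sum_{n\ge0}g_nx^n$ be the unique formal power series with $g(0)=1$ satisfying $$g(x)=\frac{1}{1-\frac{x}{1-x}-x^2 g(x)},$$ equivalently $g(x)=\frac{1-2x-\sqrt{1-4x+8x^3-4x^4}}{2x^2(1-x)}$ (so $g_n$ begins $1,1,3,7,19,51,143,407,\dots$). Let $h_n=\det\left(g_{i+j}\right)_{0\le i,j\le n}$ be its Hankel transform. Then for all $n\ge0$, $$h_n=2^{\lfloor (n+1)^2/4\rfloor}.$$ In particular $h_n=4\,h_{n-2}^2/h_{n-4}$ for all $n\ge4$.
   Context: The Hankel transform of a sequence $(g_n)_{n\ge0}$ is the sequence $h_n=\det(g_{i+j})_{0\le i,j\le n}$, $n\ge 0$. *)

theory Defs
  imports "HOL-Computational_Algebra.Formal_Power_Series" "Jordan_Normal_Form.Determinant"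
begin

definition gser :: "real fps" where
  "gser = (THE f. fps_nth f 0 = 1 \<and>
                  f = 1 / (1 - fps_X / (1 - fps_X) - fps_X ^ 2 * f))"

definition gseq :: "nat \<Rightarrow> real" where
  "gseq n = fps_nth gser n"

definition hankel :: "(nat \<Rightarrow> real) \<Rightarrow> nat \<Rightarrow> real" where
  "hankel a n = det (mat (n + 1) (n + 1) (\<lambda>(i, j). a (i + j)))"

end

theory Submission
  imports Defs
begin

definition PP :: "real fps" where "PP = 1 - 4*fps_X + 8*fps_X^3 - 4*fps_X^4"
definition SS :: "real fps" where "SS = fps_radical (\<lambda>_ _. 1) 2 PP"
definition NN :: "real fps" where "NN = 1 - 2*fps_X - SS"
definition GG :: "real fps" where "GG = fps_shift 2 NN * inverse (fps_const 2 * (1 - fps_X))"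

lemma PP0: "fps_nth PP 0 = 1" by (simp add: PP_def)
lemma SS_sq: "SS^2 = PP"
proof -
  have "(fps_radical (\<lambda>_ _. 1) (Suc 1) PP) ^ (Suc 1) = PP"
    using power_radical[of PP "\<lambda>_ _. (1::real)" 1] PP0 by simp
  thus ?thesis by (simp add: SS_def numeral_2_eq_2)
qed
declare fps_numeral_nth[simp]
lemma SS0: "fps_nth SS 0 = 1" by (simp add: SS_def)
lemma SS1: "fps_nth SS 1 = -2"
proof -
  have "fps_nth (SS^2) 1 = fps_nth PP 1" by (simp add: SS_sq)
  hence "2 * fps_nth SS 1 = -4" by (simp add: power2_eq_square fps_mult_nth SS0 PP_def)
  thus ?thesis by simp
qed
lemma SS2: "fps_nth SS 2 = -2"
proof -
  have "fps_nth (SS^2) 2 = fps_nth PP 2" by (simp add: SS_sq)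
  hence "2 * fps_nth SS 2 + fps_nth SS 1 * fps_nth SS 1 = 0"
    by (simp add: power2_eq_square fps_mult_nth SS0 PP_def numeral_2_eq_2)
  thus ?thesis using SS1 by simp
qed
lemma SS1': "fps_nth SS (Suc 0) = -2" using SS1 by simp
lemma SS2': "fps_nth SS (Suc (Suc 0)) = -2" using SS2 by (simp add: numeral_2_eq_2)
lemma NN_eq: "NN = fps_X^2 * fps_shift 2 NN"
  apply (rule fps_ext)
  apply (auto simp: fps_X_power_mult_nth NN_def SS0 SS1' less_2_cases_iff)
  apply (subgoal_tac "Suc (Suc (n-2)) = n")
  apply auto
  done
lemma GG_rel: "fps_const 2 * fps_X^2 * (1 - fps_X) * GG = 1 - 2*fps_X - SS"
proof -
  have u: "fps_nth (fps_const 2 * (1 - fps_X)) 0 \<noteq> (0::real)" by simp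
  have "fps_const 2 * fps_X^2 * (1 - fps_X) * GG = fps_X^2 * fps_shift 2 NN * ((fps_const 2 * (1 - fps_X)) * inverse (fps_const 2 * (1 - fps_X)))"
    by (simp add: GG_def algebra_simps)
  also have "\<dots> = NN" using inverse_mult_eq_1'[OF u] NN_eq by simp
  finally show ?thesis by (simp add: NN_def)
qed
lemma GG0: "fps_nth GG 0 = 1"
  by (simp add: GG_def NN_def SS2' numeral_2_eq_2)

lemma quad_GG: "fps_X^2 * (1 - fps_X) * GG^2 - (1 - 2*fps_X) * GG + (1 - fps_X) = 0"
proof -
  let ?q = "fps_X^2 * (1 - fps_X) * GG^2 - (1 - 2*fps_X) * GG + (1 - fps_X)"
  have "fps_const 4 * fps_X^2 * (1 - fps_X) * ?q
        = (fps_const 2 * fps_X^2 * (1 - fps_X) * GG)^2 - 2*(1-2*fps_X)*(fps_const 2 * fps_X^2 * (1 - fps_X) * GG) + 4*fps_X^2*(1-fps_X)^2"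
    by (simp add: algebra_simps power2_eq_square fps_numeral_fps_const)
  also have "\<dots> = SS^2 - (1 - 2*fps_X)^2 + 4*fps_X^2*(1-fps_X)^2" unfolding GG_rel by (simp add: algebra_simps power2_eq_square)
  also have "\<dots> = 0" unfolding SS_sq PP_def by (simp add: algebra_simps power2_eq_square power3_eq_cube power4_eq_xxxx)
  finally have "fps_const 4 * fps_X^2 * (1 - fps_X) * ?q = 0" .
  moreover have "fps_const 4 * fps_X^2 * (1 - fps_X) \<noteq> (0::real fps)"
  proof
    assume "fps_const 4 * fps_X^2 * (1 - fps_X) = (0::real fps)"
    hence "fps_nth (fps_const 4 * fps_X^2 * (1 - fps_X)) 2 = (0::real)" by simp
    thus False by (simp add: fps_mult_nth numeral_2_eq_2)
  qed
  ultimately show ?thesis by simp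
qed
definition Dn :: "real fps \<Rightarrow> real fps" where
  "Dn f = 1 - fps_X / (1 - fps_X) - fps_X ^ 2 * f"

lemma Dn0: "fps_nth (Dn f) 0 = 1"
  by (simp add: Dn_def fps_divide_unit)

lemma Dn_mult_abs:
  assumes h: "(1-x)*i = (1::'a::comm_ring_1)"
  shows "(1-x)*(f*(1 - x*i - x^2*f)) = (1 - 2*x)*f - x^2*(1-x)*f^2"
proof -
  have "(1-x)*(f*(1 - x*i - x^2*f)) = (1-x)*f - x*f*((1-x)*i) - x^2*(1-x)*f^2"
    by (simp add: algebra_simps power2_eq_square)
  also have "\<dots> = (1 - 2*x)*f - x^2*(1-x)*f^2" unfolding h by (simp add: algebra_simps)
  finally show ?thesis .
qed

lemma Dn_mult: "(1 - fps_X) * (f * Dn f) = (1 - 2*fps_X) * f - fps_X^2 * (1 - fps_X) * f^2"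
proof -
  have u: "fps_nth (1 - fps_X :: real fps) 0 \<noteq> 0" by simp
  have "Dn f = 1 - fps_X * inverse (1 - fps_X) - fps_X^2 * f"
    unfolding Dn_def by (simp add: fps_divide_unit)
  thus ?thesis using Dn_mult_abs[OF inverse_mult_eq_1'[OF u], of f] by simp
qed

lemma oneX_nz: "(1 - fps_X :: real fps) \<noteq> 0"
proof
  assume "(1 - fps_X :: real fps) = 0"
  hence "fps_nth (1 - fps_X :: real fps) 0 = 0" by simp
  thus False by simp
qed

lemma GG_fix: "GG = 1 / Dn GG"
proof -
  have "(1 - fps_X) * (GG * Dn GG - 1) = (1 - fps_X) * (GG * Dn GG) - (1 - fps_X)"
    by (simp add: algebra_simps)
  also have "\<dots> = - (fps_X^2 * (1 - fps_X) * GG^2 - (1 - 2*fps_X) * GG + (1 - fps_X))"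
    unfolding Dn_mult by (simp add: algebra_simps)
  finally have "(1 - fps_X) * (GG * Dn GG - 1) = 0" using quad_GG by simp
  hence "GG * Dn GG = 1" using oneX_nz by simp
  hence "inverse (Dn GG) = GG" by (intro fps_inverse_unique) (simp add: mult.commute)
  thus ?thesis by (simp add: fps_divide_unit Dn0)
qed

lemma GG_uniq:
  assumes f0: "fps_nth f 0 = 1" and ff: "f = 1 / Dn f"
  shows "f = GG"
proof -
  have "f * Dn f = 1" using ff inverse_mult_eq_1[of "Dn f"] Dn0 by (metis fps_divide_unit mult_1 zero_neq_one)
  hence "(1 - fps_X) * (f * Dn f) = 1 - fps_X" by simp
  hence qf: "fps_X^2 * (1 - fps_X) * f^2 - (1 - 2*fps_X) * f + (1 - fps_X) = 0"
    unfolding Dn_mult by (simp add: algebra_simps)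
  have "(f - GG) * (fps_X^2 * (1 - fps_X) * (f + GG) - (1 - 2*fps_X))
     = (fps_X^2 * (1 - fps_X) * f^2 - (1 - 2*fps_X) * f + (1 - fps_X)) - (fps_X^2 * (1 - fps_X) * GG^2 - (1 - 2*fps_X) * GG + (1 - fps_X))"
    by (simp add: algebra_simps power2_eq_square)
  hence "(f - GG) * (fps_X^2 * (1 - fps_X) * (f + GG) - (1 - 2*fps_X)) = 0"
    using qf quad_GG by simp
  moreover have "fps_X^2 * (1 - fps_X) * (f + GG) - (1 - 2*fps_X) \<noteq> 0"
  proof
    assume "fps_X^2 * (1 - fps_X) * (f + GG) - (1 - 2*fps_X) = 0"
    hence "fps_nth (fps_X^2 * (1 - fps_X) * (f + GG) - (1 - 2*fps_X)) 0 = 0" by simp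
    thus False by simp
  qed
  ultimately show ?thesis by simp
qed

lemma gser_GG: "gser = GG"
proof -
  have "gser = GG" unfolding gser_def
  proof (rule the_equality)
    show "fps_nth GG 0 = 1 \<and> GG = 1 / (1 - fps_X / (1 - fps_X) - fps_X ^ 2 * GG)"
      using GG0 GG_fix by (simp add: Dn_def)
    fix f :: "real fps" assume "fps_nth f 0 = 1 \<and> f = 1 / (1 - fps_X / (1 - fps_X) - fps_X ^ 2 * f)"
    thus "f = GG" using GG_uniq[of f] by (simp add: Dn_def)
  qed
  thus ?thesis .
qed
definition TO :: "real fps" where "TO = inverse (1 - fps_X - fps_X^2 * GG)"
definition TT :: "nat \<Rightarrow> real fps" where "TT k = (if even k then GG else TO)"
definition bet :: "nat \<Rightarrow> real" where "bet k = (if even k then 2 else 1)"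

lemma TO_eq: "TO * (1 - fps_X - fps_X^2 * GG) = 1"
  unfolding TO_def by (rule inverse_mult_eq_1) simp

lemma GG_eq: "GG * (1 - fps_X - 2 * fps_X^2 * TO) = 1"
proof -
  let ?A = "1 - fps_X - fps_X^2 * GG"
  have AT: "?A * TO = 1" using TO_eq by (simp add: mult.commute)
  have "?A * (GG * (1 - fps_X - 2 * fps_X^2 * TO) - 1) = GG * (?A * (1 - fps_X) - 2 * fps_X^2 * (?A * TO)) - ?A"
    by (simp add: algebra_simps)
  also have "\<dots> = - (fps_X^2 * (1 - fps_X) * GG^2 - (1 - 2*fps_X) * GG + (1 - fps_X))"
    unfolding AT by (simp add: algebra_simps power2_eq_square)
  also have "\<dots> = 0" using quad_GG by simp
  finally have "?A * (GG * (1 - fps_X - 2 * fps_X^2 * TO) - 1) = 0" .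
  moreover have "?A \<noteq> 0"
  proof
    assume "?A = 0" hence "fps_nth ?A 0 = 0" by simp
    thus False by simp
  qed
  ultimately show ?thesis by simp
qed

lemma TT_eq: "TT k * (1 - fps_X - fps_const (bet k) * fps_X^2 * TT (Suc k)) = 1"
  using GG_eq TO_eq by (cases "even k") (auto simp: TT_def bet_def fps_numeral_fps_const[symmetric])

definition CC :: "nat \<Rightarrow> real fps" where "CC k = fps_X^k * (\<Prod>j\<in>{..k}. TT j)"

lemma CC_Suc: "CC (Suc k) = fps_X * CC k * TT (Suc k)"
  by (simp add: CC_def atMost_Suc algebra_simps)

lemma CC_rec: "CC k = (if k = 0 then 1 else fps_X * CC (k - 1)) + fps_X * CC k + fps_const (bet k) * fps_X * CC (Suc k)"
proof -
  define W where "W = fps_X^k * (\<Prod>j\<in>{..<k}. TT j)"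
  have CW: "CC k = W * TT k" by (simp add: CC_def W_def lessThan_Suc_atMost[symmetric] algebra_simps)
  have W: "W = (if k = 0 then 1 else fps_X * CC (k - 1))"
    by (cases k) (simp_all add: W_def CC_def lessThan_Suc_atMost algebra_simps)
  have "CC k * (1 - fps_X - fps_const (bet k) * fps_X^2 * TT (Suc k)) = W"
    using TT_eq[of k] CW by (metis mult.assoc mult_1_right)
  hence "W = CC k - fps_X * CC k - fps_const (bet k) * fps_X * CC (Suc k)"
    by (simp add: CC_Suc algebra_simps power2_eq_square)
  thus ?thesis using W by (simp add: algebra_simps)
qed

lemma CC_nth0: "fps_nth (CC k) 0 = (if k = 0 then 1 else 0)"
  by (simp add: CC_def fps_X_power_mult_nth TT_def GG0 TO_def)

lemma CC_nthSuc: "fps_nth (CC k) (Suc n) = (if k = 0 then 0 else fps_nth (CC (k - 1)) n) + fps_nth (CC k) n + bet k * fps_nth (CC (Suc k)) n"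
proof -
  have "fps_nth (CC k) (Suc n) = fps_nth ((if k = 0 then 1 else fps_X * CC (k - 1)) + fps_X * CC k + fps_const (bet k) * fps_X * CC (Suc k)) (Suc n)"
    by (subst CC_rec) simp
  also have "\<dots> = (if k = 0 then 0 else fps_nth (CC (k - 1)) n) + fps_nth (CC k) n + bet k * fps_nth (CC (Suc k)) n"
    by (simp add: mult.assoc)
  finally show ?thesis .
qed

fun LL :: "nat \<Rightarrow> nat \<Rightarrow> real" where
  "LL 0 k = (if k = 0 then 1 else 0)"
| "LL (Suc n) k = (if k = 0 then 0 else LL n (k - 1)) + LL n k + bet k * LL n (Suc k)"

lemma LL_CC: "LL n k = fps_nth (CC k) n"
  by (induction n arbitrary: k) (simp_all add: CC_nth0 CC_nthSuc)

lemma gseq_LL: "gseq n = LL n 0"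
  by (simp add: LL_CC gseq_def gser_GG CC_def TT_def)

lemma LL_zero: "n < k \<Longrightarrow> LL n k = 0"
  by (induction n arbitrary: k) auto

lemma LL_diag: "LL n n = 1"
  by (induction n) (auto simp: LL_zero)
definition BB :: "nat \<Rightarrow> real" where "BB k = 2 ^ ((k + 1) div 2)"

lemma bet_BB: "bet k * BB k = BB (Suc k)"
  by (cases "even k") (auto simp: bet_def BB_def elim!: evenE oddE)

definition msum :: "nat \<Rightarrow> nat \<Rightarrow> nat \<Rightarrow> real" where
  "msum N i j = (\<Sum>k<N. LL i k * LL j k * BB k)"

lemma msum_step:
  assumes "Suc i < N"
  shows "msum N (Suc i) j = msum N i (Suc j)"
proof -
  obtain M where N: "N = Suc M" and iM: "i < M" using assms by (cases N) auto
  have s1: "(\<Sum>k<N. BB k * LL j k * (if k = 0 then 0 else LL i (k - 1)))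
      = (\<Sum>m<N. LL i m * BB m * (bet m * LL j (Suc m)))"
  proof -
    have "(\<Sum>k<N. BB k * LL j k * (if k = 0 then 0 else LL i (k - 1)))
        = (\<Sum>m<M. BB (Suc m) * LL j (Suc m) * LL i m)"
      unfolding N sum.lessThan_Suc_shift by simp
    also have "\<dots> = (\<Sum>m<N. LL i m * BB m * (bet m * LL j (Suc m)))"
      unfolding N sum.lessThan_Suc using iM
      by (simp add: LL_zero bet_BB[symmetric] algebra_simps)
    finally show ?thesis .
  qed
  have s2: "(\<Sum>k<N. BB k * LL j k * (bet k * LL i (Suc k)))
      = (\<Sum>m<N. LL i m * BB m * (if m = 0 then 0 else LL j (m - 1)))"
  proof -
    have "(\<Sum>m<N. LL i m * BB m * (if m = 0 then 0 else LL j (m - 1)))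
        = (\<Sum>k<M. LL i (Suc k) * BB (Suc k) * LL j k)"
      unfolding N sum.lessThan_Suc_shift by simp
    also have "\<dots> = (\<Sum>k<N. BB k * LL j k * (bet k * LL i (Suc k)))"
      unfolding N sum.lessThan_Suc using iM
      by (simp add: LL_zero bet_BB[symmetric] algebra_simps)
    finally show ?thesis by simp
  qed
  have "msum N (Suc i) j = (\<Sum>k<N. BB k * LL j k * (if k = 0 then 0 else LL i (k - 1)))
     + (\<Sum>k<N. BB k * LL j k * LL i k) + (\<Sum>k<N. BB k * LL j k * (bet k * LL i (Suc k)))"
    unfolding msum_def by (simp add: sum.distrib[symmetric] algebra_simps)
  also have "\<dots> = (\<Sum>m<N. LL i m * BB m * (bet m * LL j (Suc m)))
     + (\<Sum>k<N. LL i k * BB k * LL j k) + (\<Sum>m<N. LL i m * BB m * (if m = 0 then 0 else LL j (m - 1)))"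
    unfolding s1 s2 by (simp add: algebra_simps)
  also have "\<dots> = msum N i (Suc j)"
    unfolding msum_def by (simp add: sum.distrib[symmetric] algebra_simps)
  finally show ?thesis .
qed

lemma msum_LL: "i < N \<Longrightarrow> msum N i j = LL (i + j) 0"
proof (induction i arbitrary: j)
  case 0
  then obtain M where N: "N = Suc M" by (cases N) auto
  show ?case unfolding msum_def N sum.lessThan_Suc_shift by (simp add: BB_def)
next
  case (Suc i)
  then show ?case using msum_step[of i N j] by simp
qed
lemma sum_div: "(\<Sum>k<Suc n. (k + 1) div 2) = (n + 1)^2 div 4"
proof (induction n)
  case 0 then show ?case by simp
next
  case (Suc n)
  have "(n + 1)^2 div 4 + (Suc n + 1) div 2 = (Suc n + 1)^2 div 4"
  proof (cases "even n")
    case True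
    then obtain m where n: "n = 2*m" by (auto elim: evenE)
    have a: "(n+1)^2 = 4*(m*m+m) + 1" by (simp add: n power2_eq_square algebra_simps)
    have b: "(Suc n + 1)^2 = 4*((m+1)*(m+1))" by (simp add: n power2_eq_square algebra_simps)
    have c: "(Suc n + 1) div 2 = m + 1" by (simp add: n)
    show ?thesis unfolding a b c by simp
  next
    case False
    then obtain m where n: "n = 2*m+1" by (auto elim: oddE)
    have a: "(n+1)^2 = 4*((m+1)*(m+1))" by (simp add: n power2_eq_square algebra_simps)
    have b: "(Suc n + 1)^2 = 4*((m+1)*(m+2)) + 1" by (simp add: n power2_eq_square algebra_simps)
    have c: "(Suc n + 1) div 2 = m + 1" by (simp add: n)
    show ?thesis unfolding a b c by (simp add: algebra_simps)
  qed
  then show ?case using Suc by (simp add: sum.lessThan_Suc)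
qed

lemma hankel_formula: "hankel gseq n = 2 ^ (((n + 1) ^ 2) div 4)"
proof -
  define A1 :: "real mat" where "A1 = mat (n+1) (n+1) (\<lambda>(i,k). LL i k * BB k)"
  define A2 :: "real mat" where "A2 = mat (n+1) (n+1) (\<lambda>(k,j). LL j k)"
  have eq: "mat (n + 1) (n + 1) (\<lambda>(i, j). gseq (i + j)) = A1 * A2"
  proof (rule eq_matI)
    fix i j assume i: "i < dim_row (A1 * A2)" and j: "j < dim_col (A1 * A2)"
    hence i': "i < n+1" and j': "j < n+1" by (auto simp: A1_def A2_def)
    have "(A1 * A2) $$ (i,j) = (\<Sum>k\<in>{0..<n+1}. LL i k * BB k * LL j k)"
      using i' j' by (simp add: A1_def A2_def scalar_prod_def)
    also have "\<dots> = msum (n+1) i j" unfolding msum_def by (simp add: lessThan_atLeast0 algebra_simps)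
    also have "\<dots> = gseq (i + j)" using i' by (simp add: msum_LL gseq_LL)
    finally show "mat (n + 1) (n + 1) (\<lambda>(i, j). gseq (i + j)) $$ (i, j) = (A1 * A2) $$ (i, j)"
      using i' j' by simp
  qed (auto simp: A1_def A2_def)
  have d1: "det A1 = (\<Prod>k\<in>{0..<n+1}. BB k)"
    by (subst det_lower_triangular[of "n+1"]) (auto simp: A1_def LL_zero LL_diag prod_list_diag_prod)
  have d2: "det A2 = 1"
    by (subst det_upper_triangular[of _ "n+1"]) (auto simp: A2_def LL_zero LL_diag prod_list_diag_prod)
  have "hankel gseq n = det A1 * det A2"
    unfolding hankel_def eq by (rule det_mult) (auto simp: A1_def A2_def)
  also have "\<dots> = (\<Prod>k\<in>{0..<n+1}. BB k)" using d1 d2 by simp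
  also have "\<dots> = 2 ^ (\<Sum>k<Suc n. (k + 1) div 2)"
    unfolding BB_def power_sum lessThan_atLeast0 by simp
  finally show ?thesis by (simp only: sum_div)
qed
lemma exp_rel: "((m::nat) + 5)^2 div 4 + (m + 1)^2 div 4 = 2 + 2 * ((m + 3)^2 div 4)"
proof (cases "even m")
  case True
  then obtain k where m: "m = 2*k" by (auto elim: evenE)
  have a: "(m+5)^2 = 4*(k*k+5*k+6) + 1" by (simp add: m power2_eq_square algebra_simps)
  have b: "(m+1)^2 = 4*(k*k+k) + 1" by (simp add: m power2_eq_square algebra_simps)
  have c: "(m+3)^2 = 4*(k*k+3*k+2) + 1" by (simp add: m power2_eq_square algebra_simps)
  have h: "\<And>x::nat. (4*x+1) div 4 = x" by simp
  show ?thesis by (simp only: a b c h) simp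
next
  case False
  then obtain k where m: "m = 2*k+1" by (auto elim: oddE)
  have a: "(m+5)^2 = 4*((k+3)*(k+3))" by (simp add: m power2_eq_square algebra_simps)
  have b: "(m+1)^2 = 4*((k+1)*(k+1))" by (simp add: m power2_eq_square algebra_simps)
  have c: "(m+3)^2 = 4*((k+2)*(k+2))" by (simp add: m power2_eq_square algebra_simps)
  have h: "\<And>x::nat. (4*x) div 4 = x" by simp
  show ?thesis by (simp only: a b c h) (simp add: algebra_simps)
qed

theorem mainTheorem2:
  shows "(\<forall>n. hankel gseq n = 2 ^ (((n + 1) ^ 2) div 4)) \<and>
         (\<forall>n\<ge>4. hankel gseq n = 4 * (hankel gseq (n - 2)) ^ 2 / hankel gseq (n - 4))"
proof (intro conjI allI impI)
  fix n show "hankel gseq n = 2 ^ (((n + 1) ^ 2) div 4)" by (rule hankel_formula)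
next
  fix n :: nat assume "n \<ge> 4"
  then obtain m where n: "n = m + 4" by (metis add.commute le_Suc_ex)
  have e: "(n+1)^2 div 4 + (n-4+1)^2 div 4 = 2 + 2 * ((n-2+1)^2 div 4)"
  proof -
    have "n+1 = m+5" "n-4+1 = m+1" "n-2+1 = m+3" using n by auto
    thus ?thesis using exp_rel[of m] by (simp only:)
  qed
  have "(2::real) ^ ((n+1)^2 div 4) * 2 ^ ((n-4+1)^2 div 4) = 4 * (2 ^ ((n-2+1)^2 div 4))^2"
    unfolding power_add[symmetric] e by (simp add: power_add power_mult[symmetric] mult.commute)
  hence "(2::real) ^ ((n+1)^2 div 4) = 4 * (2 ^ ((n-2+1)^2 div 4))^2 / 2 ^ ((n-4+1)^2 div 4)"
    by (simp add: field_simps)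
  thus "hankel gseq n = 4 * (hankel gseq (n - 2)) ^ 2 / hankel gseq (n - 4)"
    by (simp only: hankel_formula)
qed
end
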